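(* Let $k\ge1$ be an integer, $G$ a graph and $A,B\subseteq V(G)$ with $\mathrm{dist}(A,B)>2^k$ and \[\mathrm{tp}_k\big(G\langle X\mapsto A\rangle[N_{2^{k-1}-1}[A]]\big)=\mathrm{tp}_k\big(G\langle X\mapsto B\rangle[N_{2^{k-1}-1}[B]]\big).\] Then for every first-order formula $\varphi(x)$ of quantifier rank at most $k-1$ in the signature of $G$, \[G\langle A\rangle\models\exists x\in A\ \varphi(x)\iff G\langle B\rangle\models\exists x\in B\ \varphi(x).\]
   Context: Graphs are finite, loopless, undirected, with finitely many unary color predicates. $\mathrm{dist}(A,B)$ is the minimum distance between a vertex of $A$ and a vertex of $B$; $N_r[S]$ is the set of vertices at distance at most $r$ from $S$. $G\langle X\mapsto W\rangle$ is $G$ expanded by a new unary predicate $X$ interpreted as $W$; $G\langle W\rangle$ is the expansion by a new unary predicate named $W$ interpreted as $W$; $\exists x\in W\,\psi$ abbreviates $\exists x\,(W(x)\wedge\psi)$. $H[S]$ denotes the induced substructure. $\mathrm{tp}_k(H)$ is the set of first-order sentences of quantifier rank at most $k$ true in $H$. *)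

theory Defs
  imports Main
begin

record ('v, 'c) cgraph =
  verts :: "'v set"
  adj   :: "'v \<Rightarrow> 'v \<Rightarrow> bool"
  col   :: "'c \<Rightarrow> 'v set"

definition wf_cgraph :: "('v, 'c) cgraph \<Rightarrow> bool" where
  "wf_cgraph G \<longleftrightarrow> finite (verts G)
     \<and> (\<forall>u v. adj G u v \<longrightarrow> u \<in> verts G \<and> v \<in> verts G)
     \<and> (\<forall>u v. adj G u v \<longrightarrow> adj G v u)
     \<and> (\<forall>u. \<not> adj G u u)
     \<and> (\<forall>c. col G c \<subseteq> verts G)"

fun reach :: "('v, 'c) cgraph \<Rightarrow> nat \<Rightarrow> 'v \<Rightarrow> 'v \<Rightarrow> bool" where
  "reach G 0 u v \<longleftrightarrow> u = v \<and> u \<in> verts G"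
| "reach G (Suc n) u v \<longleftrightarrow> reach G n u v \<or> (\<exists>w. reach G n u w \<and> adj G w v)"

definition dist_gt :: "('v, 'c) cgraph \<Rightarrow> 'v set \<Rightarrow> 'v set \<Rightarrow> nat \<Rightarrow> bool" where
  "dist_gt G A B d \<longleftrightarrow> \<not> (\<exists>a\<in>A. \<exists>b\<in>B. reach G d a b)"

definition nbhd :: "('v, 'c) cgraph \<Rightarrow> nat \<Rightarrow> 'v set \<Rightarrow> 'v set" where
  "nbhd G r S = {v \<in> verts G. \<exists>u\<in>S. reach G r u v}"

definition induced :: "('v, 'c) cgraph \<Rightarrow> 'v set \<Rightarrow> ('v, 'c) cgraph" where
  "induced G S = \<lparr> verts = verts G \<inter> S,
                   adj = (\<lambda>u v. adj G u v \<and> u \<in> S \<and> v \<in> S),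
                   col = (\<lambda>c. col G c \<inter> S) \<rparr>"

text \<open>Expansion G<X |-> W> by a new unary predicate X, represented by the colour name None;
  old colour c is renamed Some c.\<close>
definition expand :: "('v, 'c) cgraph \<Rightarrow> 'v set \<Rightarrow> ('v, 'c option) cgraph" where
  "expand G W = \<lparr> verts = verts G, adj = adj G,
                  col = (\<lambda>c. case c of None \<Rightarrow> W | Some d \<Rightarrow> col G d) \<rparr>"

datatype 'c fm =
    FEq nat nat
  | FAdj nat nat
  | FCol 'c nat
  | FNot "'c fm"
  | FAnd "'c fm" "'c fm"
  | FEx nat "'c fm"

fun fv :: "'c fm \<Rightarrow> nat set" where
  "fv (FEq x y) = {x, y}"
| "fv (FAdj x y) = {x, y}"
| "fv (FCol c x) = {x}"
| "fv (FNot \<phi>) = fv \<phi>"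
| "fv (FAnd \<phi> \<psi>) = fv \<phi> \<union> fv \<psi>"
| "fv (FEx x \<phi>) = fv \<phi> - {x}"

fun qr :: "'c fm \<Rightarrow> nat" where
  "qr (FEq x y) = 0"
| "qr (FAdj x y) = 0"
| "qr (FCol c x) = 0"
| "qr (FNot \<phi>) = qr \<phi>"
| "qr (FAnd \<phi> \<psi>) = max (qr \<phi>) (qr \<psi>)"
| "qr (FEx x \<phi>) = Suc (qr \<phi>)"

fun sat :: "('v, 'c) cgraph \<Rightarrow> (nat \<Rightarrow> 'v) \<Rightarrow> 'c fm \<Rightarrow> bool" where
  "sat G e (FEq x y) \<longleftrightarrow> e x = e y"
| "sat G e (FAdj x y) \<longleftrightarrow> adj G (e x) (e y)"
| "sat G e (FCol c x) \<longleftrightarrow> e x \<in> col G c"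
| "sat G e (FNot \<phi>) \<longleftrightarrow> \<not> sat G e \<phi>"
| "sat G e (FAnd \<phi> \<psi>) \<longleftrightarrow> sat G e \<phi> \<and> sat G e \<psi>"
| "sat G e (FEx x \<phi>) \<longleftrightarrow> (\<exists>v\<in>verts G. sat G (e(x := v)) \<phi>)"

definition tp :: "nat \<Rightarrow> ('v, 'c) cgraph \<Rightarrow> 'c fm set" where
  "tp k H = {\<phi>. fv \<phi> = {} \<and> qr \<phi> \<le> k \<and> sat H (\<lambda>_. undefined) \<phi>}"

end

theory Submission
  imports Defs
begin


definition adjv :: "('v, 'c) cgraph \<Rightarrow> bool" where
  "adjv H \<longleftrightarrow> (\<forall>u v. adj H u v \<longrightarrow> u \<in> verts H \<and> v \<in> verts H)"

lemma reach_fst: "reach H n u v \<Longrightarrow> u \<in> verts H"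
proof (induction n arbitrary: v)
  case 0 then have "u = v \<and> u \<in> verts H" by (metis reach.simps(1))
  then show ?case by blast
next
  case (Suc n)
  then have "reach H n u v \<or> (\<exists>w. reach H n u w \<and> adj H w v)" by simp
  then show ?case using Suc.IH by blast
qed

lemma reach_snd: "adjv H \<Longrightarrow> reach H n u v \<Longrightarrow> v \<in> verts H"
proof (induction n arbitrary: v)
  case 0 then have "u = v \<and> u \<in> verts H" by (metis reach.simps(1))
  then show ?case by blast
next
  case (Suc n)
  then have "reach H n u v \<or> (\<exists>w. reach H n u w \<and> adj H w v)" by simp
  then show ?case using Suc.IH Suc.prems(1) unfolding adjv_def by blast
qed

lemma reach_refl: "u \<in> verts H \<Longrightarrow> reach H n u u"
proof (induction n)
  case 0 then show ?case by simp
next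
  case (Suc n) then show ?case by simp
qed

lemma reach_mono: "reach H n u v \<Longrightarrow> n \<le> n' \<Longrightarrow> reach H n' u v"
proof (induction n' )
  case 0 then show ?case by auto
next
  case (Suc n') then show ?case by (cases "n = Suc n'") auto
qed

lemma reach_trans: "reach H n u v \<Longrightarrow> reach H n' v w \<Longrightarrow> reach H (n + n') u w"
proof (induction n' arbitrary: w)
  case 0 then show ?case by simp
next
  case (Suc n') then show ?case by auto
qed

lemma reach_adj: "u \<in> verts H \<Longrightarrow> adj H u v \<Longrightarrow> reach H 1 u v"
  by simp

lemma reach_sym:
  assumes "\<forall>u v. adj H u v \<longrightarrow> adj H v u" "adjv H"
  shows "reach H n u v \<Longrightarrow> reach H n v u"
proof (induction n arbitrary: v)
  case 0 then show ?case by auto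
next
  case (Suc n)
  show ?case
  proof (cases "reach H n u v")
    case True then show ?thesis using Suc.IH[OF True] by simp
  next
    case False
    then obtain w where w: "reach H n u w" "adj H w v" using Suc by auto
    have "reach H n w u" using Suc.IH[OF w(1)] .
    moreover have "reach H 1 v w" using w assms by (auto simp: adjv_def)
    ultimately have "reach H (1 + n) v u" using reach_trans by metis
    then show ?thesis by simp
  qed
qed

lemma reach_split: "adjv H \<Longrightarrow> reach H (n + n') u w \<Longrightarrow> \<exists>v. reach H n u v \<and> reach H n' v w"
proof (induction n' arbitrary: w)
  case 0 then show ?case using reach_snd reach_refl by fastforce
next
  case (Suc n')
  have "reach H (n + n') u w \<or> (\<exists>z. reach H (n + n') u z \<and> adj H z w)" using Suc.prems by simp
  then show ?case
  proof
    assume "reach H (n + n') u w"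
    then obtain v where "reach H n u v" "reach H n' v w" using Suc by blast
    then show ?thesis by auto
  next
    assume "\<exists>z. reach H (n + n') u z \<and> adj H z w"
    then obtain z where z: "reach H (n + n') u z" "adj H z w" by blast
    then obtain v where "reach H n u v" "reach H n' v z" using Suc by blast
    then show ?thesis using z by auto
  qed
qed

definition FOr :: "'c fm \<Rightarrow> 'c fm \<Rightarrow> 'c fm" where
  "FOr p q = FNot (FAnd (FNot p) (FNot q))"

fun dfm :: "nat \<Rightarrow> nat \<Rightarrow> nat \<Rightarrow> 'c fm" where
  "dfm 0 x y = FOr (FEq x y) (FAdj x y)"
| "dfm (Suc i) x y = FEx (Suc (max x y)) (FAnd (dfm i x (Suc (max x y))) (dfm i (Suc (max x y)) y))"

lemma dfm_qr: "qr (dfm i x y :: 'c fm) = i"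
  by (induction i arbitrary: x y) (auto simp: FOr_def)

lemma dfm_fv: "fv (dfm i x y :: 'c fm) \<subseteq> {x, y}"
  by (induction i arbitrary: x y) (auto simp: FOr_def)

lemma dfm_sat: "adjv H \<Longrightarrow> e x \<in> verts H \<Longrightarrow> sat H e (dfm i x y) \<longleftrightarrow> reach H (2 ^ i) (e x) (e y)"
proof (induction i arbitrary: x y e)
  case 0 then show ?case by (auto simp: FOr_def)
next
  case (Suc i)
  let ?z = "Suc (max x y)"
  have zx: "?z \<noteq> x" and zy: "?z \<noteq> y" by auto
  have "sat H e (dfm (Suc i) x y) \<longleftrightarrow>
     (\<exists>v\<in>verts H. sat H (e(?z := v)) (dfm i x ?z) \<and> sat H (e(?z := v)) (dfm i ?z y))"
    by (simp only: dfm.simps sat.simps)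
  also have "\<dots> \<longleftrightarrow>
     (\<exists>v\<in>verts H. reach H (2 ^ i) (e x) v \<and> reach H (2 ^ i) v (e y))"
  proof (intro bex_cong refl)
    fix v assume v: "v \<in> verts H"
    have 1: "sat H (e(?z := v)) (dfm i x ?z) \<longleftrightarrow> reach H (2 ^ i) (e x) v"
      using Suc.IH[of "e(?z := v)" x ?z] Suc.prems zx by (simp only: fun_upd_other fun_upd_same)
    have 2: "sat H (e(?z := v)) (dfm i ?z y) \<longleftrightarrow> reach H (2 ^ i) v (e y)"
      using Suc.IH[of "e(?z := v)" ?z y] Suc.prems zy v by (simp only: fun_upd_other fun_upd_same)
    show "(sat H (e(?z := v)) (dfm i x ?z) \<and> sat H (e(?z := v)) (dfm i ?z y)) \<longleftrightarrow>
      (reach H (2 ^ i) (e x) v \<and> reach H (2 ^ i) v (e y))" using 1 2 by simp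
  qed
  also have "\<dots> \<longleftrightarrow> reach H (2 ^ i + 2 ^ i) (e x) (e y)"
  proof
    assume "\<exists>v\<in>verts H. reach H (2 ^ i) (e x) v \<and> reach H (2 ^ i) v (e y)"
    then obtain v where "reach H (2 ^ i) (e x) v" "reach H (2 ^ i) v (e y)" by blast
    then show "reach H (2 ^ i + 2 ^ i) (e x) (e y)" by (rule reach_trans)
  next
    assume "reach H (2 ^ i + 2 ^ i) (e x) (e y)"
    then obtain v where v: "reach H (2 ^ i) (e x) v" "reach H (2 ^ i) v (e y)"
      using reach_split[OF Suc.prems(1)] by blast
    have "v \<in> verts H" by (rule reach_fst[OF v(2)])
    then show "\<exists>v\<in>verts H. reach H (2 ^ i) (e x) v \<and> reach H (2 ^ i) v (e y)" using v by blast
  qed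
  finally have "sat H e (dfm (Suc i) x y) \<longleftrightarrow> reach H (2 ^ i + 2 ^ i) (e x) (e y)" .
  moreover have "(2::nat) ^ Suc i = 2 ^ i + 2 ^ i" by simp
  ultimately show ?case by (simp only:)
qed


definition pinv :: "('v, 'c) cgraph \<Rightarrow> ('w, 'c) cgraph \<Rightarrow> ('v \<times> 'w) set \<Rightarrow> bool" where
  "pinv H H' P \<longleftrightarrow> P \<subseteq> verts H \<times> verts H'
     \<and> (\<forall>x x' y y'. (x, x') \<in> P \<longrightarrow> (y, y') \<in> P \<longrightarrow>
          (x = y \<longleftrightarrow> x' = y') \<and> (adj H x y \<longleftrightarrow> adj H' x' y'))
     \<and> (\<forall>x x' c. (x, x') \<in> P \<longrightarrow> (x \<in> col H c \<longleftrightarrow> x' \<in> col H' c))"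

fun ef :: "('v, 'c) cgraph \<Rightarrow> ('w, 'c) cgraph \<Rightarrow> nat \<Rightarrow> ('v \<times> 'w) set \<Rightarrow> bool" where
  "ef H H' 0 P \<longleftrightarrow> pinv H H' P"
| "ef H H' (Suc j) P \<longleftrightarrow> pinv H H' P
     \<and> (\<forall>u\<in>verts H. \<exists>u'\<in>verts H'. ef H H' j (insert (u, u') P))
     \<and> (\<forall>u'\<in>verts H'. \<exists>u\<in>verts H. ef H H' j (insert (u, u') P))"

lemma ef_pinv: "ef H H' j P \<Longrightarrow> pinv H H' P"
  by (cases j) auto

lemma pinv_anti: "pinv H H' P \<Longrightarrow> P' \<subseteq> P \<Longrightarrow> pinv H H' P'"
  unfolding pinv_def by blast

lemma ef_anti: "ef H H' j P \<Longrightarrow> P' \<subseteq> P \<Longrightarrow> ef H H' j P'"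
proof (induction j arbitrary: P P')
  case 0 then show ?case using pinv_anti by auto
next
  case (Suc j)
  have p: "pinv H H' P'" using Suc.prems pinv_anti by auto
  have f: "\<forall>u\<in>verts H. \<exists>u'\<in>verts H'. ef H H' j (insert (u, u') P')"
  proof
    fix u assume "u \<in> verts H"
    then obtain u' where "u' \<in> verts H'" "ef H H' j (insert (u, u') P)" using Suc.prems by auto
    moreover have "insert (u, u') P' \<subseteq> insert (u, u') P" using Suc.prems by auto
    ultimately show "\<exists>u'\<in>verts H'. ef H H' j (insert (u, u') P')" using Suc.IH by blast
  qed
  have b: "\<forall>u'\<in>verts H'. \<exists>u\<in>verts H. ef H H' j (insert (u, u') P')"
  proof
    fix u' assume "u' \<in> verts H'"
    then obtain u where "u \<in> verts H" "ef H H' j (insert (u, u') P)" using Suc.prems by auto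
    moreover have "insert (u, u') P' \<subseteq> insert (u, u') P" using Suc.prems by auto
    ultimately show "\<exists>u\<in>verts H. ef H H' j (insert (u, u') P')" using Suc.IH by blast
  qed
  show ?case using p f b by simp
qed

lemma ef_Suc_mono: "ef H H' (Suc j) P \<Longrightarrow> ef H H' j P"
proof (induction j arbitrary: P)
  case 0 then show ?case by simp
next
  case (Suc j)
  have p: "pinv H H' P" using Suc.prems by simp
  have f: "\<forall>u\<in>verts H. \<exists>u'\<in>verts H'. ef H H' j (insert (u, u') P)"
  proof
    fix u assume "u \<in> verts H"
    then obtain u' where "u' \<in> verts H'" "ef H H' (Suc j) (insert (u, u') P)" using Suc.prems by auto
    then show "\<exists>u'\<in>verts H'. ef H H' j (insert (u, u') P)" using Suc.IH by blast
  qed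
  have b: "\<forall>u'\<in>verts H'. \<exists>u\<in>verts H. ef H H' j (insert (u, u') P)"
  proof
    fix u' assume "u' \<in> verts H'"
    then obtain u where "u \<in> verts H" "ef H H' (Suc j) (insert (u, u') P)" using Suc.prems by auto
    then show "\<exists>u\<in>verts H. ef H H' j (insert (u, u') P)" using Suc.IH by blast
  qed
  show ?case using p f b by simp
qed

lemma ef_mono: "ef H H' j P \<Longrightarrow> j' \<le> j \<Longrightarrow> ef H H' j' P"
proof (induction j)
  case 0 then show ?case by simp
next
  case (Suc j) then show ?case using ef_Suc_mono by (cases "j' = Suc j") auto
qed

lemma ef_sat:
  "ef H H' j P \<Longrightarrow> qr \<phi> \<le> j \<Longrightarrow> (\<forall>y\<in>fv \<phi>. (e y, e' y) \<in> P)
    \<Longrightarrow> sat H e \<phi> \<longleftrightarrow> sat H' e' \<phi>"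
proof (induction \<phi> arbitrary: j P e e')
  case (FEq x y) then show ?case using ef_pinv[OF FEq(1)] by (auto simp: pinv_def)
next
  case (FAdj x y) then show ?case using ef_pinv[OF FAdj(1)] by (auto simp: pinv_def)
next
  case (FCol c x) then show ?case using ef_pinv[OF FCol(1)] by (auto simp: pinv_def)
next
  case (FNot \<phi>) then show ?case by simp
next
  case (FAnd \<phi> \<psi>)
  have "sat H e \<phi> \<longleftrightarrow> sat H' e' \<phi>" using FAnd.IH(1)[of j P e e'] FAnd.prems by auto
  moreover have "sat H e \<psi> \<longleftrightarrow> sat H' e' \<psi>" using FAnd.IH(2)[of j P e e'] FAnd.prems by auto
  ultimately show ?case by simp
next
  case (FEx x \<phi>)
  obtain j' where j: "j = Suc j'" using FEx.prems(2) by (cases j) auto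
  have q: "qr \<phi> \<le> j'" using FEx.prems(2) j by simp
  have ef: "ef H H' (Suc j') P" using FEx.prems(1) j by simp
  have fvP: "\<forall>y\<in>fv \<phi>. y \<noteq> x \<longrightarrow> (e y, e' y) \<in> P" using FEx.prems(3) by auto
  show ?case
  proof
    assume "sat H e (FEx x \<phi>)"
    then obtain v where v: "v \<in> verts H" "sat H (e(x := v)) \<phi>" by auto
    then obtain v' where v': "v' \<in> verts H'" "ef H H' j' (insert (v, v') P)" using ef by auto
    have "\<forall>y\<in>fv \<phi>. ((e(x := v)) y, (e'(x := v')) y) \<in> insert (v, v') P" using fvP by auto
    then have "sat H' (e'(x := v')) \<phi>" using FEx.IH[OF v'(2) q] v(2) by blast
    then show "sat H' e' (FEx x \<phi>)" using v' by auto
  next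
    assume "sat H' e' (FEx x \<phi>)"
    then obtain v' where v': "v' \<in> verts H'" "sat H' (e'(x := v')) \<phi>" by auto
    then obtain v where v: "v \<in> verts H" "ef H H' j' (insert (v, v') P)" using ef by auto
    have "\<forall>y\<in>fv \<phi>. ((e(x := v)) y, (e'(x := v')) y) \<in> insert (v, v') P" using fvP by auto
    then have "sat H (e(x := v)) \<phi>" using FEx.IH[OF v(2) q] v'(2) by blast
    then show "sat H e (FEx x \<phi>)" using v by auto
  qed
qed


definition TT :: "'c fm" where "TT = FNot (FEx 0 (FNot (FEq 0 0)))"

fun conj :: "'c fm list \<Rightarrow> 'c fm" where
  "conj [] = TT"
| "conj [f] = f"
| "conj (f # g # fs) = FAnd f (conj (g # fs))"

definition disj :: "'c fm list \<Rightarrow> 'c fm" where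
  "disj fs = FNot (conj (map FNot fs))"

lemma sat_TT: "sat H e TT"
  by (simp add: TT_def)

lemma sat_conj: "sat H e (conj fs) \<longleftrightarrow> (\<forall>f\<in>set fs. sat H e f)"
  by (induction fs rule: conj.induct) (auto simp: sat_TT)

lemma sat_disj: "sat H e (disj fs) \<longleftrightarrow> (\<exists>f\<in>set fs. sat H e f)"
  by (simp add: disj_def sat_conj)

lemma fv_conj: "fv (conj fs) \<subseteq> \<Union>(fv ` set fs)"
  by (induction fs rule: conj.induct) (auto simp: TT_def)

lemma fv_disj: "fv (disj fs) \<subseteq> \<Union>(fv ` set fs)"
  using fv_conj[of "map FNot fs"] by (auto simp: disj_def)

lemma qr_conj: "fs \<noteq> [] \<Longrightarrow> \<forall>f\<in>set fs. qr f \<le> r \<Longrightarrow> qr (conj fs) \<le> r"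
  by (induction fs rule: conj.induct) auto

lemma qr_disj: "fs \<noteq> [] \<Longrightarrow> \<forall>f\<in>set fs. qr f \<le> r \<Longrightarrow> qr (disj fs) \<le> r"
  using qr_conj[of "map FNot fs" r] by (auto simp: disj_def)

definition vlist :: "('v, 'c) cgraph \<Rightarrow> 'v list" where
  "vlist H = (SOME l. set l = verts H)"

lemma set_vlist: "finite (verts H) \<Longrightarrow> set (vlist H) = verts H"
  unfolding vlist_def by (rule someI_ex) (rule finite_list)

definition clist :: "'c::finite list" where
  "clist = (SOME l. set l = UNIV)"

lemma set_clist: "set clist = UNIV"
  unfolding clist_def by (rule someI_ex) (rule finite_list, simp)

definition env :: "'v list \<Rightarrow> nat \<Rightarrow> 'v" where
  "env us i = (if i < length us then us ! i else undefined)"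

lemma env_snoc: "env (us @ [u]) = (env us)(length us := u)"
  by (rule ext) (auto simp: env_def nth_append)

lemma env_Nil: "env [] = (\<lambda>_. undefined)"
  by (rule ext) (simp add: env_def)

definition eqlit :: "'v list \<Rightarrow> nat \<Rightarrow> nat \<Rightarrow> 'c fm" where
  "eqlit us i j = (if us ! i = us ! j then FEq i j else FNot (FEq i j))"
definition adjlit :: "('v, 'c) cgraph \<Rightarrow> 'v list \<Rightarrow> nat \<Rightarrow> nat \<Rightarrow> 'c fm" where
  "adjlit H us i j = (if adj H (us ! i) (us ! j) then FAdj i j else FNot (FAdj i j))"
definition collit :: "('v, 'c) cgraph \<Rightarrow> 'v list \<Rightarrow> nat \<Rightarrow> 'c \<Rightarrow> 'c fm" where
  "collit H us i c = (if us ! i \<in> col H c then FCol c i else FNot (FCol c i))"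

definition atl :: "('v, 'c::finite) cgraph \<Rightarrow> 'v list \<Rightarrow> 'c fm list" where
  "atl H us = concat (map (\<lambda>i. concat (map (\<lambda>j. [eqlit us i j, adjlit H us i j]) [0..<length us])
      @ map (\<lambda>c. collit H us i c) clist) [0..<length us])"

lemma mem_atl: "f \<in> set (atl H us) \<longleftrightarrow>
   (\<exists>i<length us. (\<exists>j<length us. f = eqlit us i j \<or> f = adjlit H us i j) \<or> (\<exists>c. f = collit H us i c))"
  unfolding atl_def by (simp add: set_clist image_iff atLeast0LessThan; blast)

lemma atl_fv: "f \<in> set (atl H us) \<Longrightarrow> fv f \<subseteq> {..<length us}"
  by (auto simp: mem_atl eqlit_def adjlit_def collit_def split: if_splits)

lemma atl_qr: "f \<in> set (atl H us) \<Longrightarrow> qr f = 0"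
  by (auto simp: mem_atl eqlit_def adjlit_def collit_def)

lemma atl_ne: "us \<noteq> [] \<Longrightarrow> atl H us \<noteq> []"
proof -
  assume "us \<noteq> []"
  then have "eqlit us 0 0 \<in> set (atl H us)" unfolding mem_atl by blast
  then show ?thesis by auto
qed

lemma atl_self: "f \<in> set (atl H us) \<Longrightarrow> sat H (env us) f"
  by (auto simp: mem_atl eqlit_def adjlit_def collit_def env_def)

lemma atl_pinv:
  assumes "length us' = length us" "set us \<subseteq> verts H" "set us' \<subseteq> verts H'"
    and "\<forall>f\<in>set (atl H us). sat H' (env us') f"
  shows "pinv H H' (set (zip us us'))"
proof -
  have lit: "\<And>i j. i < length us \<Longrightarrow> j < length us \<Longrightarrow>
      (us ! i = us ! j \<longleftrightarrow> us' ! i = us' ! j) \<and> (adj H (us ! i) (us ! j) \<longleftrightarrow> adj H' (us' ! i) (us' ! j))"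
  proof -
    fix i j assume ij: "i < length us" "j < length us"
    have "eqlit us i j \<in> set (atl H us)" "adjlit H us i j \<in> set (atl H us)"
      unfolding mem_atl using ij by blast+
    then have "sat H' (env us') (eqlit us i j)" "sat H' (env us') (adjlit H us i j)"
      using assms(4) by blast+
    then show "(us ! i = us ! j \<longleftrightarrow> us' ! i = us' ! j) \<and> (adj H (us ! i) (us ! j) \<longleftrightarrow> adj H' (us' ! i) (us' ! j))"
      using ij assms(1) by (auto simp: eqlit_def adjlit_def env_def split: if_splits)
  qed
  have lc: "\<And>i c. i < length us \<Longrightarrow> (us ! i \<in> col H c \<longleftrightarrow> us' ! i \<in> col H' c)"
  proof -
    fix i c assume i: "i < length us"
    have "collit H us i c \<in> set (atl H us)"
      unfolding mem_atl using i by blast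
    then have "sat H' (env us') (collit H us i c)"
      using assms(4) by blast
    then show "us ! i \<in> col H c \<longleftrightarrow> us' ! i \<in> col H' c"
      using i assms(1) by (auto simp: collit_def env_def split: if_splits)
  qed
  have sub: "set (zip us us') \<subseteq> verts H \<times> verts H'"
    using assms(2,3) by (auto dest: set_zip_leftD set_zip_rightD)
  have A: "\<forall>x x' y y'. (x, x') \<in> set (zip us us') \<longrightarrow> (y, y') \<in> set (zip us us') \<longrightarrow>
          (x = y \<longleftrightarrow> x' = y') \<and> (adj H x y \<longleftrightarrow> adj H' x' y')"
  proof (intro allI impI)
    fix x x' y y' assume "(x, x') \<in> set (zip us us')" "(y, y') \<in> set (zip us us')"
    then obtain i j where "i < length us" "x = us ! i" "x' = us' ! i" "j < length us" "y = us ! j" "y' = us' ! j"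
      using assms(1) by (auto simp: in_set_zip)
    then show "(x = y \<longleftrightarrow> x' = y') \<and> (adj H x y \<longleftrightarrow> adj H' x' y')" using lit by simp
  qed
  have B: "\<forall>x x' c. (x, x') \<in> set (zip us us') \<longrightarrow> (x \<in> col H c \<longleftrightarrow> x' \<in> col H' c)"
  proof (intro allI impI)
    fix x x' c assume "(x, x') \<in> set (zip us us')"
    then obtain i where "i < length us" "x = us ! i" "x' = us' ! i"
      using assms(1) by (auto simp: in_set_zip)
    then show "(x \<in> col H c) = (x' \<in> col H' c)" using lc by simp
  qed
  show ?thesis unfolding pinv_def using sub A B by blast
qed

fun hint :: "('v, 'c::finite) cgraph \<Rightarrow> nat \<Rightarrow> 'v list \<Rightarrow> 'c fm" where
  "hint H 0 us = conj (atl H us)"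
| "hint H (Suc j) us = conj (atl H us
     @ map (\<lambda>u. FEx (length us) (hint H j (us @ [u]))) (vlist H)
     @ [if vlist H = [] then FNot (FEx (length us) (FEq (length us) (length us)))
        else FNot (FEx (length us) (FNot (disj (map (\<lambda>u. hint H j (us @ [u])) (vlist H)))))])"

lemma Un_app3: "\<forall>f\<in>set xs. fv f \<subseteq> S \<Longrightarrow> \<forall>y\<in>set ys. fv (g y) \<subseteq> S \<Longrightarrow> fv z \<subseteq> S
  \<Longrightarrow> \<Union>(fv ` set (xs @ map g ys @ [z])) \<subseteq> S"
  by auto

lemma qr_app3: "\<forall>f\<in>set xs. qr f \<le> r \<Longrightarrow> \<forall>y\<in>set ys. qr (g y) \<le> r \<Longrightarrow> qr z \<le> r
  \<Longrightarrow> \<forall>f\<in>set (xs @ map g ys @ [z]). qr f \<le> r"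
  by auto

lemma hint_fv: "fv (hint H j us) \<subseteq> {..<length us}"
proof (induction j arbitrary: us)
  case 0
  have "\<Union>(fv ` set (atl H us)) \<subseteq> {..<length us}" using atl_fv by blast
  then have "fv (conj (atl H us)) \<subseteq> {..<length us}" using fv_conj[of "atl H us"] by blast
  then show ?case by (simp only: hint.simps)
next
  case (Suc j)
  let ?n = "length us"
  have a: "\<forall>f\<in>set (atl H us). fv f \<subseteq> {..<?n}" using atl_fv by blast
  have b: "\<forall>u\<in>set (vlist H). fv (FEx ?n (hint H j (us @ [u]))) \<subseteq> {..<?n}"
  proof
    fix u
    have "fv (hint H j (us @ [u])) \<subseteq> {..<Suc ?n}" using Suc.IH[of "us @ [u]"] by simp
    then show "fv (FEx ?n (hint H j (us @ [u]))) \<subseteq> {..<?n}" by auto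
  qed
  have c0: "\<forall>f\<in>set (map (\<lambda>u. hint H j (us @ [u])) (vlist H)). fv f \<subseteq> {..<Suc ?n}"
  proof
    fix f assume "f \<in> set (map (\<lambda>u. hint H j (us @ [u])) (vlist H))"
    then obtain u where "f = hint H j (us @ [u])" by auto
    then show "fv f \<subseteq> {..<Suc ?n}" using Suc.IH[of "us @ [u]"] by simp
  qed
  have c: "fv (disj (map (\<lambda>u. hint H j (us @ [u])) (vlist H))) \<subseteq> {..<Suc ?n}"
    using fv_disj[of "map (\<lambda>u. hint H j (us @ [u])) (vlist H)"] c0 by blast
  have d: "fv (if vlist H = [] then FNot (FEx ?n (FEq ?n ?n))
        else FNot (FEx ?n (FNot (disj (map (\<lambda>u. hint H j (us @ [u])) (vlist H)))))) \<subseteq> {..<?n}"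
    using c by auto
  have "fv (hint H (Suc j) us) \<subseteq> \<Union>(fv ` set (atl H us
     @ map (\<lambda>u. FEx (length us) (hint H j (us @ [u]))) (vlist H)
     @ [if vlist H = [] then FNot (FEx (length us) (FEq (length us) (length us)))
        else FNot (FEx (length us) (FNot (disj (map (\<lambda>u. hint H j (us @ [u])) (vlist H)))))]))"
    by (simp only: hint.simps fv_conj)
  also have "\<dots> \<subseteq> {..<?n}" by (rule Un_app3[OF a b d])
  finally show ?case .
qed

lemma hint_qr_Suc:
  assumes "\<forall>u. qr (hint H j (us @ [u])) \<le> j"
  shows "qr (hint H (Suc j) us) \<le> Suc j"
proof -
  let ?n = "length us"
  have a: "\<forall>f\<in>set (atl H us). qr f \<le> Suc j" using atl_qr by fastforce
  have b: "\<forall>u\<in>set (vlist H). qr (FEx ?n (hint H j (us @ [u]))) \<le> Suc j" using assms by simp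
  have d: "qr (if vlist H = [] then FNot (FEx ?n (FEq ?n ?n))
        else FNot (FEx ?n (FNot (disj (map (\<lambda>u. hint H j (us @ [u])) (vlist H)))))) \<le> Suc j"
  proof (cases "vlist H = []")
    case True then show ?thesis by simp
  next
    case False
    have "\<forall>f\<in>set (map (\<lambda>u. hint H j (us @ [u])) (vlist H)). qr f \<le> j" using assms by auto
    then have "qr (disj (map (\<lambda>u. hint H j (us @ [u])) (vlist H))) \<le> j"
      using False by (intro qr_disj) auto
    then show ?thesis using False by simp
  qed
  have "qr (conj (atl H us
     @ map (\<lambda>u. FEx (length us) (hint H j (us @ [u]))) (vlist H)
     @ [if vlist H = [] then FNot (FEx (length us) (FEq (length us) (length us)))
        else FNot (FEx (length us) (FNot (disj (map (\<lambda>u. hint H j (us @ [u])) (vlist H)))))])) \<le> Suc j"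
    by (rule qr_conj) (simp, rule qr_app3[OF a b d])
  then show ?thesis by (simp only: hint.simps)
qed

lemma hint_qr_ne: "us \<noteq> [] \<Longrightarrow> qr (hint H j us) \<le> j"
proof (induction j arbitrary: us)
  case 0
  have "qr (conj (atl H us)) \<le> 0" using qr_conj[of "atl H us" 0] atl_ne[OF 0] atl_qr by fastforce
  then show ?case by (simp only: hint.simps)
next
  case (Suc j)
  have "\<forall>u. qr (hint H j (us @ [u])) \<le> j"
  proof
    fix u show "qr (hint H j (us @ [u])) \<le> j" by (rule Suc.IH) simp
  qed
  then show ?case by (rule hint_qr_Suc)
qed

lemma hint_qr: "1 \<le> j \<Longrightarrow> qr (hint H j us) \<le> j"
proof -
  assume "1 \<le> j"
  then obtain i where i: "j = Suc i" by (cases j) auto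
  have "\<forall>u. qr (hint H i (us @ [u])) \<le> i"
  proof
    fix u show "qr (hint H i (us @ [u])) \<le> i" by (rule hint_qr_ne) simp
  qed
  then show ?thesis unfolding i by (rule hint_qr_Suc)
qed

lemma hint_self: "finite (verts H) \<Longrightarrow> set us \<subseteq> verts H \<Longrightarrow> sat H (env us) (hint H j us)"
proof (induction j arbitrary: us)
  case 0
  have "\<forall>f\<in>set (atl H us). sat H (env us) f" using atl_self by blast
  then show ?case by (simp only: hint.simps sat_conj)
next
  case (Suc j)
  let ?n = "length us"
  have a: "\<forall>f\<in>set (atl H us). sat H (env us) f" using atl_self by blast
  have b: "\<forall>u\<in>set (vlist H). sat H (env us) (FEx ?n (hint H j (us @ [u])))"
  proof
    fix u assume "u \<in> set (vlist H)"
    then have u: "u \<in> verts H" using set_vlist Suc.prems by blast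
    have "sat H (env (us @ [u])) (hint H j (us @ [u]))" using Suc.IH Suc.prems u by auto
    then show "sat H (env us) (FEx ?n (hint H j (us @ [u])))" using u by (auto simp: env_snoc)
  qed
  have d: "sat H (env us) (if vlist H = [] then FNot (FEx ?n (FEq ?n ?n))
        else FNot (FEx ?n (FNot (disj (map (\<lambda>u. hint H j (us @ [u])) (vlist H))))))"
  proof (cases "vlist H = []")
    case True
    then have "verts H = {}" using set_vlist Suc.prems by fastforce
    then show ?thesis using True by simp
  next
    case False
    have "\<forall>v\<in>verts H. sat H ((env us)(?n := v)) (disj (map (\<lambda>u. hint H j (us @ [u])) (vlist H)))"
    proof
      fix v assume v: "v \<in> verts H"
      then have "v \<in> set (vlist H)" using set_vlist Suc.prems by blast
      moreover have "sat H (env (us @ [v])) (hint H j (us @ [v]))" using Suc.IH Suc.prems v by auto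
      ultimately show "sat H ((env us)(?n := v)) (disj (map (\<lambda>u. hint H j (us @ [u])) (vlist H)))"
        by (auto simp: sat_disj env_snoc)
    qed
    then show ?thesis using False by simp
  qed
  show ?case using a b d by (simp only: hint.simps sat_conj) auto
qed

lemma ball_app3: "\<forall>f\<in>set (xs @ map g ys @ [z]). P f \<Longrightarrow>
   (\<forall>f\<in>set xs. P f) \<and> (\<forall>y\<in>set ys. P (g y)) \<and> P z"
  by auto

lemma hint_ef:
  "finite (verts H) \<Longrightarrow> set us \<subseteq> verts H \<Longrightarrow> set us' \<subseteq> verts H' \<Longrightarrow> length us' = length us
   \<Longrightarrow> sat H' (env us') (hint H j us) \<Longrightarrow> ef H H' j (set (zip us us'))"
proof (induction j arbitrary: us us')
  case 0
  have "\<forall>f\<in>set (atl H us). sat H' (env us') f" using 0(5) by (simp only: hint.simps sat_conj)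
  then have "pinv H H' (set (zip us us'))" by (rule atl_pinv[OF 0(4) 0(2) 0(3)])
  then show ?case by simp
next
  case (Suc j)
  let ?n = "length us"
  have all: "\<forall>f\<in>set (atl H us
     @ map (\<lambda>u. FEx (length us) (hint H j (us @ [u]))) (vlist H)
     @ [if vlist H = [] then FNot (FEx (length us) (FEq (length us) (length us)))
        else FNot (FEx (length us) (FNot (disj (map (\<lambda>u. hint H j (us @ [u])) (vlist H)))))]).
      sat H' (env us') f" using Suc.prems(5) by (simp only: hint.simps sat_conj)
  note A = ball_app3[OF all]
  have allA: "\<forall>f\<in>set (atl H us). sat H' (env us') f" using A by blast
  have allB: "\<forall>u\<in>set (vlist H). sat H' (env us') (FEx ?n (hint H j (us @ [u])))" using A by blast
  have allC: "sat H' (env us') (if vlist H = [] then FNot (FEx ?n (FEq ?n ?n))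
        else FNot (FEx ?n (FNot (disj (map (\<lambda>u. hint H j (us @ [u])) (vlist H))))))" using A by blast
  from allA have p: "pinv H H' (set (zip us us'))" by (rule atl_pinv[OF Suc.prems(4) Suc.prems(2) Suc.prems(3)])
  have f: "\<forall>u\<in>verts H. \<exists>u'\<in>verts H'. ef H H' j (insert (u, u') (set (zip us us')))"
  proof
    fix u assume u: "u \<in> verts H"
    then have "u \<in> set (vlist H)" using set_vlist[OF Suc.prems(1)] by simp
    then have "sat H' (env us') (FEx ?n (hint H j (us @ [u])))" using allB by blast
    then obtain u' where u': "u' \<in> verts H'" "sat H' (env (us' @ [u'])) (hint H j (us @ [u]))"
      using Suc.prems(4) by (auto simp: env_snoc)
    have "ef H H' j (set (zip (us @ [u]) (us' @ [u'])))"
      using Suc.IH[of "us @ [u]" "us' @ [u']"] Suc.prems u u' by auto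
    moreover have "set (zip (us @ [u]) (us' @ [u'])) = insert (u, u') (set (zip us us'))"
      using Suc.prems(4) by simp
    ultimately show "\<exists>u'\<in>verts H'. ef H H' j (insert (u, u') (set (zip us us')))" using u' by auto
  qed
  have b: "\<forall>u'\<in>verts H'. \<exists>u\<in>verts H. ef H H' j (insert (u, u') (set (zip us us')))"
  proof
    fix u' assume u': "u' \<in> verts H'"
    show "\<exists>u\<in>verts H. ef H H' j (insert (u, u') (set (zip us us')))"
    proof (cases "vlist H = []")
      case True
      then have "sat H' (env us') (FNot (FEx ?n (FEq ?n ?n)))" using allC by simp
      then show ?thesis using u' by simp
    next
      case False
      then have "sat H' (env us') (FNot (FEx ?n (FNot (disj (map (\<lambda>u. hint H j (us @ [u])) (vlist H))))))"
        using allC by simp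
      then have "sat H' ((env us')(?n := u')) (disj (map (\<lambda>u. hint H j (us @ [u])) (vlist H)))"
        using u' by auto
      then obtain u where u: "u \<in> set (vlist H)" "sat H' (env (us' @ [u'])) (hint H j (us @ [u]))"
        using Suc.prems(4) by (auto simp: sat_disj env_snoc)
      have uv: "u \<in> verts H" using u set_vlist[OF Suc.prems(1)] by simp
      have "ef H H' j (set (zip (us @ [u]) (us' @ [u'])))"
        using Suc.IH[of "us @ [u]" "us' @ [u']"] Suc.prems uv u' u by auto
      moreover have "set (zip (us @ [u]) (us' @ [u'])) = insert (u, u') (set (zip us us'))"
        using Suc.prems(4) by simp
      ultimately show ?thesis using uv by auto
    qed
  qed
  show ?case using p f b by simp
qed


definition HA :: "('v, 'c) cgraph \<Rightarrow> nat \<Rightarrow> 'v set \<Rightarrow> ('v, 'c option) cgraph" where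
  "HA G m A = induced (expand G A) (nbhd G (2 ^ m - 1) A)"

lemma wf_adjv: "wf_cgraph G \<Longrightarrow> adjv G"
  by (simp add: wf_cgraph_def adjv_def)

lemma nbhd_sub: "nbhd G r A \<subseteq> verts G"
  by (auto simp: nbhd_def)

lemma HA_verts: "verts (HA G m A) = nbhd G (2 ^ m - 1) A"
  using nbhd_sub[of G "2 ^ m - 1" A] by (auto simp: HA_def induced_def expand_def)

lemma HA_adj: "adj (HA G m A) u v \<longleftrightarrow> adj G u v \<and> u \<in> nbhd G (2 ^ m - 1) A \<and> v \<in> nbhd G (2 ^ m - 1) A"
  by (simp add: HA_def induced_def expand_def)

lemma HA_col_Some: "col (HA G m A) (Some d) = col G d \<inter> nbhd G (2 ^ m - 1) A"
  by (simp add: HA_def induced_def expand_def)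

lemma HA_col_None: "col (HA G m A) None = A \<inter> nbhd G (2 ^ m - 1) A"
  by (simp add: HA_def induced_def expand_def)

lemma HA_adjv: "adjv (HA G m A)"
  unfolding adjv_def HA_verts HA_adj by blast

lemma HA_finite: "wf_cgraph G \<Longrightarrow> finite (verts (HA G m A))"
  unfolding HA_verts using nbhd_sub[of G "2 ^ m - 1" A] by (auto simp: wf_cgraph_def intro: finite_subset)

lemma reach_HA_G: "reach (HA G m A) n u v \<Longrightarrow> reach G n u v"
proof (induction n arbitrary: v)
  case 0
  then have "u = v \<and> u \<in> verts (HA G m A)" by (metis reach.simps(1))
  then have "u \<in> verts G" "u = v" using nbhd_sub[of G "2 ^ m - 1" A] unfolding HA_verts by blast+
  then show ?case by (metis reach.simps(1))
next
  case (Suc n)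
  then have "reach (HA G m A) n u v \<or> (\<exists>w. reach (HA G m A) n u w \<and> adj (HA G m A) w v)" by simp
  then show ?case using Suc.IH by (auto simp: HA_adj)
qed

lemma reach_G_HA: "reach G n u v \<Longrightarrow> (\<forall>w. reach G n u w \<longrightarrow> w \<in> nbhd G (2 ^ m - 1) A)
   \<Longrightarrow> reach (HA G m A) n u v"
proof (induction n arbitrary: v)
  case 0
  then have "u = v \<and> u \<in> verts G" by (metis reach.simps(1))
  moreover have "reach G 0 u u" using reach_refl reach_fst[OF 0(1)] by metis
  then have "u \<in> nbhd G (2 ^ m - 1) A" using 0(2) by blast
  ultimately show ?case by (simp add: HA_verts)
next
  case (Suc n)
  have all: "\<forall>w. reach G n u w \<longrightarrow> w \<in> nbhd G (2 ^ m - 1) A" using Suc.prems(2) by auto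
  have vin: "v \<in> nbhd G (2 ^ m - 1) A" using Suc.prems by blast
  have "reach G n u v \<or> (\<exists>w. reach G n u w \<and> adj G w v)" using Suc.prems(1) by simp
  then show ?case
  proof
    assume "reach G n u v"
    then show ?thesis using Suc.IH all by simp
  next
    assume "\<exists>w. reach G n u w \<and> adj G w v"
    then obtain w where w: "reach G n u w" "adj G w v" by blast
    have "reach (HA G m A) n u w" using Suc.IH w all by simp
    moreover have "adj (HA G m A) w v" using w all vin by (simp add: HA_adj)
    ultimately show ?thesis by auto
  qed
qed

lemma two_pow_ge1: "(1::nat) \<le> 2 ^ m" by simp

lemma sep:
  assumes wf: "wf_cgraph G" and d: "dist_gt G A B (2 ^ Suc m)"
    and x: "x \<in> nbhd G (2 ^ m - 1) A" and y: "y \<in> nbhd G (2 ^ m - 1) B"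
  shows "x \<noteq> y \<and> \<not> adj G x y"
proof -
  have sym: "\<forall>u v. adj G u v \<longrightarrow> adj G v u" and av: "adjv G" using wf wf_adjv by (auto simp: wf_cgraph_def)
  obtain a where a: "a \<in> A" "reach G (2 ^ m - 1) a x" using x by (auto simp: nbhd_def)
  obtain b where b: "b \<in> B" "reach G (2 ^ m - 1) b y" using y by (auto simp: nbhd_def)
  have yb: "reach G (2 ^ m - 1) y b" using reach_sym[OF sym av b(2)] .
  have nr: "\<not> reach G n a b" if "n \<le> 2 ^ Suc m" for n
    using d a(1) b(1) reach_mono[of G n a b "2 ^ Suc m"] that by (auto simp: dist_gt_def)
  have le1: "(2::nat) ^ m - 1 + (2 ^ m - 1) \<le> 2 ^ Suc m" by simp
  have le2: "(2::nat) ^ m - 1 + 1 + (2 ^ m - 1) \<le> 2 ^ Suc m" using two_pow_ge1[of m] by simp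
  have "x \<noteq> y"
  proof
    assume "x = y"
    then have "reach G (2 ^ m - 1) x b" using yb by simp
    then have "reach G (2 ^ m - 1 + (2 ^ m - 1)) a b" by (rule reach_trans[OF a(2)])
    then show False using nr le1 by blast
  qed
  moreover have "\<not> adj G x y"
  proof
    assume "adj G x y"
    then have "reach G 1 x y" using av by (simp add: adjv_def)
    then have "reach G (2 ^ m - 1 + 1) a y" using reach_trans[OF a(2)] by blast
    then have "reach G (2 ^ m - 1 + 1 + (2 ^ m - 1)) a b" using reach_trans yb by metis
    then show False using nr le2 by blast
  qed
  ultimately show ?thesis by blast
qed

definition Q :: "('v \<times> 'v) set \<Rightarrow> 'v set \<Rightarrow> ('v \<times> 'v) set" where
  "Q P F = P \<union> {(y, x). (x, y) \<in> P} \<union> {(f, f) | f. f \<in> F}"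

lemma Q_pinv_abs:
  assumes PS: "\<forall>x y. (x, y) \<in> P \<longrightarrow> x \<in> SA \<and> y \<in> SB"
    and S: "\<forall>x\<in>SA. \<forall>y\<in>SB. x \<noteq> y \<and> \<not> adj G x y \<and> \<not> adj G y x"
    and PE: "\<forall>x x' y y'. (x, x') \<in> P \<longrightarrow> (y, y') \<in> P \<longrightarrow> (x = y \<longleftrightarrow> x' = y') \<and> (adj G x y \<longleftrightarrow> adj G x' y')"
    and PC: "\<forall>x x' c. (x, x') \<in> P \<longrightarrow> (x \<in> col G c \<longleftrightarrow> x' \<in> col G c)"
    and FP: "\<forall>f\<in>F. \<forall>x y. (x, y) \<in> P \<longrightarrow> f \<noteq> x \<and> f \<noteq> y \<and> \<not> adj G x f \<and> \<not> adj G f x \<and> \<not> adj G y f \<and> \<not> adj G f y"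
    and V: "SA \<subseteq> verts G" "SB \<subseteq> verts G" "F \<subseteq> verts G"
  shows "pinv G G (Q P F)"
proof -
  have sub: "Q P F \<subseteq> verts G \<times> verts G" using PS V unfolding Q_def by fastforce
  have E: "(x = y \<longleftrightarrow> x' = y') \<and> (adj G x y \<longleftrightarrow> adj G x' y')"
    if xq: "(x, x') \<in> Q P F" and yq: "(y, y') \<in> Q P F" for x x' y y'
  proof -
    consider (P) "(x, x') \<in> P" | (R) "(x', x) \<in> P" | (F) "x \<in> F" "x' = x"
      using xq unfolding Q_def by blast
    then show ?thesis
    proof cases
      case P
      consider (P2) "(y, y') \<in> P" | (R2) "(y', y) \<in> P" | (F2) "y \<in> F" "y' = y"
        using yq unfolding Q_def by blast
      then show ?thesis
      proof cases
        case P2 then show ?thesis using P PE by blast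
      next
        case R2
        have "x \<in> SA" "x' \<in> SB" "y' \<in> SA" "y \<in> SB" using PS P R2 by blast+
        then show ?thesis using S by metis
      next
        case F2 then show ?thesis using FP P by metis
      qed
    next
      case R
      consider (P2) "(y, y') \<in> P" | (R2) "(y', y) \<in> P" | (F2) "y \<in> F" "y' = y"
        using yq unfolding Q_def by blast
      then show ?thesis
      proof cases
        case P2
        have "x' \<in> SA" "x \<in> SB" "y \<in> SA" "y' \<in> SB" using PS P2 R by blast+
        then show ?thesis using S by metis
      next
        case R2 then show ?thesis using R PE by blast
      next
        case F2 then show ?thesis using FP R by metis
      qed
    next
      case F
      consider (P2) "(y, y') \<in> P" | (R2) "(y', y) \<in> P" | (F2) "y \<in> F" "y' = y"
        using yq unfolding Q_def by blast
      then show ?thesis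
      proof cases
        case P2 then show ?thesis using FP F by metis
      next
        case R2 then show ?thesis using FP F by metis
      next
        case F2 then show ?thesis using F by simp
      qed
    qed
  qed
  have C: "(x \<in> col G c \<longleftrightarrow> x' \<in> col G c)" if "(x, x') \<in> Q P F" for x x' c
    using that PC unfolding Q_def by blast
  show ?thesis unfolding pinv_def using sub E C by blast
qed


definition Inv :: "('v, 'c) cgraph \<Rightarrow> 'v set \<Rightarrow> 'v set \<Rightarrow> nat \<Rightarrow> nat \<Rightarrow> ('v \<times> 'v) set \<Rightarrow> 'v set \<Rightarrow> bool" where
  "Inv G A B m j P F \<longleftrightarrow> j \<le> m \<and> ef (HA G m A) (HA G m B) j P
     \<and> (\<forall>x y. (x, y) \<in> P \<longrightarrow> (\<exists>a\<in>A. reach G (2 ^ m - 2 ^ j) a x) \<and> (\<exists>b\<in>B. reach G (2 ^ m - 2 ^ j) b y))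
     \<and> F \<subseteq> verts G
     \<and> (\<forall>f\<in>F. \<forall>x y. (x, y) \<in> P \<longrightarrow> \<not> reach G (2 ^ j) x f \<and> \<not> reach G (2 ^ j) y f)"

lemma Inv_pinv:
  assumes wf: "wf_cgraph G" and d: "dist_gt G A B (2 ^ Suc m)" and I: "Inv G A B m j P F"
  shows "pinv G G (Q P F)"
proof -
  let ?N = "nbhd G (2 ^ m - 1) A" and ?M = "nbhd G (2 ^ m - 1) B"
  have sym: "\<forall>u v. adj G u v \<longrightarrow> adj G v u" and av: "adjv G" using wf wf_adjv by (auto simp: wf_cgraph_def)
  have pv: "pinv (HA G m A) (HA G m B) P" using I ef_pinv by (auto simp: Inv_def)
  have PS: "\<forall>x y. (x, y) \<in> P \<longrightarrow> x \<in> ?N \<and> y \<in> ?M"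
    using pv unfolding pinv_def HA_verts by blast
  have S: "\<forall>x\<in>?N. \<forall>y\<in>?M. x \<noteq> y \<and> \<not> adj G x y \<and> \<not> adj G y x"
    using sep[OF wf d] sym by blast
  have PE: "\<forall>x x' y y'. (x, x') \<in> P \<longrightarrow> (y, y') \<in> P \<longrightarrow> (x = y \<longleftrightarrow> x' = y') \<and> (adj G x y \<longleftrightarrow> adj G x' y')"
  proof (intro allI impI)
    fix x x' y y' assume xy: "(x, x') \<in> P" "(y, y') \<in> P"
    have "(x = y \<longleftrightarrow> x' = y') \<and> (adj (HA G m A) x y \<longleftrightarrow> adj (HA G m B) x' y')"
      using pv xy unfolding pinv_def by blast
    moreover have "x \<in> ?N" "y \<in> ?N" "x' \<in> ?M" "y' \<in> ?M" using PS xy by blast+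
    ultimately show "(x = y \<longleftrightarrow> x' = y') \<and> (adj G x y \<longleftrightarrow> adj G x' y')" by (simp add: HA_adj)
  qed
  have PC: "\<forall>x x' c. (x, x') \<in> P \<longrightarrow> (x \<in> col G c \<longleftrightarrow> x' \<in> col G c)"
  proof (intro allI impI)
    fix x x' c assume xy: "(x, x') \<in> P"
    have "x \<in> col (HA G m A) (Some c) \<longleftrightarrow> x' \<in> col (HA G m B) (Some c)"
      using pv xy unfolding pinv_def by blast
    moreover have "x \<in> ?N" "x' \<in> ?M" using PS xy by blast+
    ultimately show "x \<in> col G c \<longleftrightarrow> x' \<in> col G c" by (simp add: HA_col_Some)
  qed
  have Fv: "F \<subseteq> verts G" and Fs: "\<forall>f\<in>F. \<forall>x y. (x, y) \<in> P \<longrightarrow> \<not> reach G (2 ^ j) x f \<and> \<not> reach G (2 ^ j) y f"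
    using I by (auto simp: Inv_def)
  have one: "(1::nat) \<le> 2 ^ j" by simp
  have nf: "f \<noteq> z \<and> \<not> adj G z f \<and> \<not> adj G f z" if "z \<in> verts G" "\<not> reach G (2 ^ j) z f" for z f
  proof -
    have r: "reach G (2 ^ j) z z" by (rule reach_refl[OF that(1)])
    have "f \<noteq> z"
    proof
      assume fz: "f = z"
      have "reach G (2 ^ j) z f" using r unfolding fz .
      then show False using that(2) by blast
    qed
    moreover have "\<not> adj G z f"
    proof
      assume "adj G z f"
      then have "reach G 1 z f" by (rule reach_adj[OF that(1)])
      then have "reach G (2 ^ j) z f" by (rule reach_mono[OF _ one])
      then show False using that(2) by blast
    qed
    moreover have "\<not> adj G f z"
    proof
      assume "adj G f z"
      then have "adj G z f" by (rule sym[rule_format])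
      then show False using \<open>\<not> adj G z f\<close> by (rule notE[rotated])
    qed
    ultimately show ?thesis by (intro conjI)
  qed
  have FP: "\<forall>f\<in>F. \<forall>x y. (x, y) \<in> P \<longrightarrow> f \<noteq> x \<and> f \<noteq> y \<and> \<not> adj G x f \<and> \<not> adj G f x \<and> \<not> adj G y f \<and> \<not> adj G f y"
  proof (intro ballI allI impI)
    fix f x y assume f: "f \<in> F" and xy: "(x, y) \<in> P"
    have "x \<in> ?N" "y \<in> ?M" using PS xy by blast+
    then have xv: "x \<in> verts G" "y \<in> verts G" using nbhd_sub[of G "2 ^ m - 1" A] nbhd_sub[of G "2 ^ m - 1" B] by blast+
    have "\<not> reach G (2 ^ j) x f \<and> \<not> reach G (2 ^ j) y f" using Fs f xy by blast
    then have "f \<noteq> x \<and> \<not> adj G x f \<and> \<not> adj G f x" "f \<noteq> y \<and> \<not> adj G y f \<and> \<not> adj G f y"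
      using nf[OF xv(1)] nf[OF xv(2)] by blast+
    then show "f \<noteq> x \<and> f \<noteq> y \<and> \<not> adj G x f \<and> \<not> adj G f x \<and> \<not> adj G y f \<and> \<not> adj G f y"
      by (intro conjI) blast+
  qed
  show ?thesis by (rule Q_pinv_abs[OF PS S PE PC FP nbhd_sub nbhd_sub Fv])
qed

lemma Q_mono: "P \<subseteq> P' \<Longrightarrow> F \<subseteq> F' \<Longrightarrow> Q P F \<subseteq> Q P' F'"
  unfolding Q_def by blast

lemma pow_arith:
  assumes "Suc j \<le> m"
  shows "(2::nat) ^ m - 2 ^ Suc j + 2 ^ j = 2 ^ m - 2 ^ j"
    and "(2::nat) ^ m - 2 ^ j \<le> 2 ^ m - 1"
    and "(2::nat) ^ m - 2 ^ Suc j \<le> 2 ^ m - 2 ^ j"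
    and "(2::nat) ^ j + 2 ^ j = 2 ^ Suc j"
proof -
  have "(2::nat) ^ Suc j \<le> 2 ^ m" using assms by (rule power_increasing) simp
  moreover have o: "(1::nat) \<le> 2 ^ j" by simp
  ultimately show "(2::nat) ^ m - 2 ^ Suc j + 2 ^ j = 2 ^ m - 2 ^ j" by auto
  show "(2::nat) ^ m - 2 ^ j \<le> 2 ^ m - 1" using o by (rule diff_le_mono2)
  show "(2::nat) ^ m - 2 ^ Suc j \<le> 2 ^ m - 2 ^ j"
    and "(2::nat) ^ j + 2 ^ j = 2 ^ Suc j" using \<open>(2::nat) ^ Suc j \<le> 2 ^ m\<close> by auto
qed

lemma transfer_dist:
  fixes H :: "('v, 'c) cgraph" and H' :: "('w, 'c) cgraph"
  assumes ef: "ef H H' j P" and pp: "(p, p') \<in> P" and cc: "(c, c') \<in> P"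
    and av: "adjv H" "adjv H'"
  shows "reach H (2 ^ j) p c \<longleftrightarrow> reach H' (2 ^ j) p' c'"
proof -
  let ?e = "((\<lambda>_. undefined)(0 := p, 1 := c)) :: nat \<Rightarrow> _"
  let ?e' = "((\<lambda>_. undefined)(0 := p', 1 := c')) :: nat \<Rightarrow> _"
  have pv: "pinv H H' P" using ef_pinv[OF ef] .
  have pin: "p \<in> verts H" "p' \<in> verts H'" using pv pp unfolding pinv_def by blast+
  have fv: "\<forall>y\<in>fv (dfm j 0 1 :: 'c fm). (?e y, ?e' y) \<in> P"
  proof
    fix y assume "y \<in> fv (dfm j 0 1 :: 'c fm)"
    then have "y = 0 \<or> y = 1" using dfm_fv by blast
    then show "(?e y, ?e' y) \<in> P" using pp cc by auto
  qed
  have q: "qr (dfm j 0 1 :: 'c fm) \<le> j" by (simp add: dfm_qr)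
  have "sat H ?e (dfm j 0 1) \<longleftrightarrow> sat H' ?e' (dfm j 0 1)"
    by (rule ef_sat[OF ef q fv])
  moreover have "sat H ?e (dfm j 0 1) \<longleftrightarrow> reach H (2 ^ j) p c"
    using dfm_sat[OF av(1), of ?e 0 j 1] pin by simp
  moreover have "sat H' ?e' (dfm j 0 1) \<longleftrightarrow> reach H' (2 ^ j) p' c'"
    using dfm_sat[OF av(2), of ?e' 0 j 1] pin by simp
  ultimately show ?thesis by simp
qed


lemma step:
  assumes wf: "wf_cgraph G" and d: "dist_gt G A B (2 ^ Suc m)"
    and I: "Inv G A B m (Suc j) P F" and cv: "c \<in> verts G"
  shows "\<exists>P' F'. Inv G A B m j P' F' \<and> Q P F \<subseteq> Q P' F' \<and> (\<exists>c'. (c, c') \<in> Q P' F' \<and> (c', c) \<in> Q P' F')"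
proof -
  let ?N = "nbhd G (2 ^ m - 1) A" and ?M = "nbhd G (2 ^ m - 1) B"
  let ?H1 = "HA G m A" and ?H2 = "HA G m B"
  let ?t = "(2::nat) ^ m - 2 ^ Suc j" and ?d = "(2::nat) ^ j"
  have av: "adjv G" using wf wf_adjv by blast
  have jm: "Suc j \<le> m" and ef1: "ef ?H1 ?H2 (Suc j) P"
    and bnd: "\<forall>x y. (x, y) \<in> P \<longrightarrow> (\<exists>a\<in>A. reach G ?t a x) \<and> (\<exists>b\<in>B. reach G ?t b y)"
    and Fv: "F \<subseteq> verts G"
    and Fs: "\<forall>f\<in>F. \<forall>x y. (x, y) \<in> P \<longrightarrow> \<not> reach G (2 ^ Suc j) x f \<and> \<not> reach G (2 ^ Suc j) y f"
    using I unfolding Inv_def by blast+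
  note ar = pow_arith[OF jm]
  have jm': "j \<le> m" using jm by simp
  have pv: "pinv ?H1 ?H2 P" using ef_pinv[OF ef1] .
  have forth: "\<forall>u\<in>verts (?H1). \<exists>u'\<in>verts (?H2). ef ?H1 ?H2 j (insert (u, u') P)"
    and bk: "\<forall>u'\<in>verts (?H2). \<exists>u\<in>verts (?H1). ef ?H1 ?H2 j (insert (u, u') P)"
    using ef1 by simp_all
  have ef0: "ef ?H1 ?H2 j P" using ef_Suc_mono[OF ef1] .
  have bnd0: "\<forall>x y. (x, y) \<in> P \<longrightarrow> (\<exists>a\<in>A. reach G (2 ^ m - 2 ^ j) a x) \<and> (\<exists>b\<in>B. reach G (2 ^ m - 2 ^ j) b y)"
  proof (intro allI impI)
    fix x y assume "(x, y) \<in> P"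
    then obtain a b where ab: "a \<in> A" "reach G ?t a x" "b \<in> B" "reach G ?t b y" using bnd by blast
    have "reach G (2 ^ m - 2 ^ j) a x" by (rule reach_mono[OF ab(2) ar(3)])
    moreover have "reach G (2 ^ m - 2 ^ j) b y" by (rule reach_mono[OF ab(4) ar(3)])
    ultimately show "(\<exists>a\<in>A. reach G (2 ^ m - 2 ^ j) a x) \<and> (\<exists>b\<in>B. reach G (2 ^ m - 2 ^ j) b y)"
      using ab(1,3) by blast
  qed
  have Fs0: "\<forall>f\<in>F. \<forall>x y. (x, y) \<in> P \<longrightarrow> \<not> reach G ?d x f \<and> \<not> reach G ?d y f"
  proof (intro ballI allI impI)
    fix f x y assume "f \<in> F" "(x, y) \<in> P"
    then have n: "\<not> reach G (2 ^ Suc j) x f \<and> \<not> reach G (2 ^ Suc j) y f" using Fs by blast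
    have le: "?d \<le> 2 ^ Suc j" by simp
    show "\<not> reach G ?d x f \<and> \<not> reach G ?d y f"
    proof (intro conjI notI)
      assume "reach G ?d x f"
      then have "reach G (2 ^ Suc j) x f" by (rule reach_mono[OF _ le])
      then show False using n by blast
    next
      assume "reach G ?d y f"
      then have "reach G (2 ^ Suc j) y f" by (rule reach_mono[OF _ le])
      then show False using n by blast
    qed
  qed
  have nearN: "\<forall>w. reach G ?d p w \<longrightarrow> w \<in> N"
    if "u0 \<in> U" "reach G ?t u0 p" "N = nbhd G (2 ^ m - 1) U" for p u0 U N
  proof (intro allI impI)
    fix w assume w: "reach G ?d p w"
    have "reach G (?t + ?d) u0 w" by (rule reach_trans[OF that(2) w])
    then have "reach G (2 ^ m - 2 ^ j) u0 w" using ar(1) by simp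
    then have "reach G (2 ^ m - 1) u0 w" by (rule reach_mono[OF _ ar(2)])
    moreover have "w \<in> verts G" by (rule reach_snd[OF av w])
    ultimately show "w \<in> N" using that(1,3) unfolding nbhd_def by blast
  qed
  have newbnd: "reach G (2 ^ m - 2 ^ j) u0 w" if "reach G ?t u0 p" "reach G ?d p w" for u0 p w
  proof -
    have "reach G (?t + ?d) u0 w" by (rule reach_trans[OF that(1) that(2)])
    then show ?thesis using ar(1) by simp
  qed
  have newsep: "\<not> reach G ?d w f" if "f \<in> F" "(p, p') \<in> P" "reach G ?d p w \<or> reach G ?d p' w" for w f p p'
  proof
    assume wf': "reach G ?d w f"
    have nr: "\<not> reach G (2 ^ Suc j) p f \<and> \<not> reach G (2 ^ Suc j) p' f" using Fs that(1,2) by blast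
    show False
    proof (cases "reach G ?d p w")
      case True
      have "reach G (?d + ?d) p f" by (rule reach_trans[OF True wf'])
      then show False using nr ar(4) by simp
    next
      case False
      then have "reach G ?d p' w" using that(3) by blast
      then have "reach G (?d + ?d) p' f" by (rule reach_trans[OF _ wf'])
      then show False using nr ar(4) by simp
    qed
  qed
  consider (CA) p p' where "(p, p') \<in> P" "reach G ?d p c"
    | (CB) p p' where "(p, p') \<in> P" "reach G ?d p' c"
    | (CF) "\<forall>p p'. (p, p') \<in> P \<longrightarrow> \<not> reach G ?d p c \<and> \<not> reach G ?d p' c"
    by blast
  then show ?thesis
  proof cases
    case CA
    obtain a where a: "a \<in> A" "reach G ?t a p" using bnd CA(1) by blast
    obtain b where b: "b \<in> B" "reach G ?t b p'" using bnd CA(1) by blast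
    have allN: "\<forall>w. reach G ?d p w \<longrightarrow> w \<in> ?N" by (rule nearN[OF a(1) a(2) refl])
    have cN: "c \<in> verts ?H1" unfolding HA_verts using allN CA(2) by blast
    have rH: "reach ?H1 ?d p c" by (rule reach_G_HA[OF CA(2) allN])
    obtain y where y: "y \<in> verts ?H2" "ef ?H1 ?H2 j (insert (c, y) P)" using forth cN by blast
    have "reach ?H2 ?d p' y"
      using transfer_dist[OF y(2), of p p' c y] CA(1) rH HA_adjv[of G m A] HA_adjv[of G m B] by blast
    then have ry: "reach G ?d p' y" by (rule reach_HA_G)
    define P' where "P' = insert (c, y) P"
    have inv: "Inv G A B m j P' F"
      unfolding Inv_def
    proof (intro conjI)
      show "j \<le> m" by (rule jm')
      show "ef ?H1 ?H2 j P'" using y(2) unfolding P'_def .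
      show "F \<subseteq> verts G" by (rule Fv)
      show "\<forall>x z. (x, z) \<in> P' \<longrightarrow> (\<exists>a\<in>A. reach G (2 ^ m - 2 ^ j) a x) \<and> (\<exists>b\<in>B. reach G (2 ^ m - 2 ^ j) b z)"
      proof (intro allI impI)
        fix x z assume "(x, z) \<in> P'"
        then have "(x, z) = (c, y) \<or> (x, z) \<in> P" unfolding P'_def by blast
        then show "(\<exists>a\<in>A. reach G (2 ^ m - 2 ^ j) a x) \<and> (\<exists>b\<in>B. reach G (2 ^ m - 2 ^ j) b z)"
        proof
          assume "(x, z) = (c, y)"
          then have xz: "x = c" "z = y" by simp_all
          have "reach G (2 ^ m - 2 ^ j) a c" by (rule newbnd[OF a(2) CA(2)])
          moreover have "reach G (2 ^ m - 2 ^ j) b y" by (rule newbnd[OF b(2) ry])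
          ultimately show ?thesis using a(1) b(1) unfolding xz by blast
        next
          assume "(x, z) \<in> P"
          then show ?thesis using bnd0 by blast
        qed
      qed
      show "\<forall>f\<in>F. \<forall>x z. (x, z) \<in> P' \<longrightarrow> \<not> reach G (2 ^ j) x f \<and> \<not> reach G (2 ^ j) z f"
      proof (intro ballI allI impI)
        fix f x z assume f: "f \<in> F" and "(x, z) \<in> P'"
        then have "(x, z) = (c, y) \<or> (x, z) \<in> P" unfolding P'_def by blast
        then show "\<not> reach G (2 ^ j) x f \<and> \<not> reach G (2 ^ j) z f"
        proof
          assume "(x, z) = (c, y)"
          then have xz: "x = c" "z = y" by simp_all
          have "\<not> reach G ?d c f" using newsep[OF f CA(1)] CA(2) by blast
          moreover have "\<not> reach G ?d y f" using newsep[OF f CA(1)] ry by blast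
          ultimately show ?thesis unfolding xz by blast
        next
          assume "(x, z) \<in> P"
          then show ?thesis using Fs0 f by blast
        qed
      qed
    qed
    have sub: "Q P F \<subseteq> Q P' F" unfolding P'_def by (rule Q_mono) auto
    have "(c, y) \<in> Q P' F" "(y, c) \<in> Q P' F" unfolding Q_def P'_def by auto
    then show ?thesis using inv sub by blast
  next
    case CB
    obtain a where a: "a \<in> A" "reach G ?t a p" using bnd CB(1) by blast
    obtain b where b: "b \<in> B" "reach G ?t b p'" using bnd CB(1) by blast
    have allM: "\<forall>w. reach G ?d p' w \<longrightarrow> w \<in> ?M" by (rule nearN[OF b(1) b(2) refl])
    have cM: "c \<in> verts ?H2" unfolding HA_verts using allM CB(2) by blast
    have rH: "reach ?H2 ?d p' c" by (rule reach_G_HA[OF CB(2) allM])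
    obtain x where x: "x \<in> verts ?H1" "ef ?H1 ?H2 j (insert (x, c) P)" using bk cM by blast
    have "reach ?H1 ?d p x"
      using transfer_dist[OF x(2), of p p' x c] CB(1) rH HA_adjv[of G m A] HA_adjv[of G m B] by blast
    then have rx: "reach G ?d p x" by (rule reach_HA_G)
    define P' where "P' = insert (x, c) P"
    have inv: "Inv G A B m j P' F"
      unfolding Inv_def
    proof (intro conjI)
      show "j \<le> m" by (rule jm')
      show "ef ?H1 ?H2 j P'" using x(2) unfolding P'_def .
      show "F \<subseteq> verts G" by (rule Fv)
      show "\<forall>x' z. (x', z) \<in> P' \<longrightarrow> (\<exists>a\<in>A. reach G (2 ^ m - 2 ^ j) a x') \<and> (\<exists>b\<in>B. reach G (2 ^ m - 2 ^ j) b z)"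
      proof (intro allI impI)
        fix x' z assume "(x', z) \<in> P'"
        then have "(x', z) = (x, c) \<or> (x', z) \<in> P" unfolding P'_def by blast
        then show "(\<exists>a\<in>A. reach G (2 ^ m - 2 ^ j) a x') \<and> (\<exists>b\<in>B. reach G (2 ^ m - 2 ^ j) b z)"
        proof
          assume "(x', z) = (x, c)"
          then have xz: "x' = x" "z = c" by simp_all
          have "reach G (2 ^ m - 2 ^ j) a x" by (rule newbnd[OF a(2) rx])
          moreover have "reach G (2 ^ m - 2 ^ j) b c" by (rule newbnd[OF b(2) CB(2)])
          ultimately show ?thesis using a(1) b(1) unfolding xz by blast
        next
          assume "(x', z) \<in> P"
          then show ?thesis using bnd0 by blast
        qed
      qed
      show "\<forall>f\<in>F. \<forall>x' z. (x', z) \<in> P' \<longrightarrow> \<not> reach G (2 ^ j) x' f \<and> \<not> reach G (2 ^ j) z f"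
      proof (intro ballI allI impI)
        fix f x' z assume f: "f \<in> F" and "(x', z) \<in> P'"
        then have "(x', z) = (x, c) \<or> (x', z) \<in> P" unfolding P'_def by blast
        then show "\<not> reach G (2 ^ j) x' f \<and> \<not> reach G (2 ^ j) z f"
        proof
          assume "(x', z) = (x, c)"
          then have xz: "x' = x" "z = c" by simp_all
          have "\<not> reach G ?d x f" using newsep[OF f CB(1)] rx by blast
          moreover have "\<not> reach G ?d c f" using newsep[OF f CB(1)] CB(2) by blast
          ultimately show ?thesis unfolding xz by blast
        next
          assume "(x', z) \<in> P"
          then show ?thesis using Fs0 f by blast
        qed
      qed
    qed
    have sub: "Q P F \<subseteq> Q P' F" unfolding P'_def by (rule Q_mono) auto
    have "(c, x) \<in> Q P' F" "(x, c) \<in> Q P' F" unfolding Q_def P'_def by auto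
    then show ?thesis using inv sub by blast
  next
    case CF
    define F' where "F' = insert c F"
    have inv: "Inv G A B m j P F'"
      unfolding Inv_def
    proof (intro conjI)
      show "j \<le> m" by (rule jm')
      show "ef ?H1 ?H2 j P" by (rule ef0)
      show "F' \<subseteq> verts G" unfolding F'_def using Fv cv by blast
      show "\<forall>x z. (x, z) \<in> P \<longrightarrow> (\<exists>a\<in>A. reach G (2 ^ m - 2 ^ j) a x) \<and> (\<exists>b\<in>B. reach G (2 ^ m - 2 ^ j) b z)"
        by (rule bnd0)
      show "\<forall>f\<in>F'. \<forall>x z. (x, z) \<in> P \<longrightarrow> \<not> reach G (2 ^ j) x f \<and> \<not> reach G (2 ^ j) z f"
      proof (intro ballI allI impI)
        fix f x z assume f: "f \<in> F'" and xz: "(x, z) \<in> P"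
        show "\<not> reach G (2 ^ j) x f \<and> \<not> reach G (2 ^ j) z f"
        proof (cases "f = c")
          case True
          then show ?thesis using CF xz by blast
        next
          case False
          then have "f \<in> F" using f unfolding F'_def by blast
          then show ?thesis using Fs0 xz by blast
        qed
      qed
    qed
    have sub: "Q P F \<subseteq> Q P F'" unfolding F'_def by (rule Q_mono) auto
    have "(c, c) \<in> Q P F'" unfolding Q_def F'_def by auto
    then show ?thesis using inv sub by blast
  qed
qed


lemma strategy:
  assumes wf: "wf_cgraph G" and d: "dist_gt G A B (2 ^ Suc m)"
  shows "Inv G A B m j P F \<Longrightarrow> ef G G j (Q P F)"
proof (induction j arbitrary: P F)
  case 0
  have "pinv G G (Q P F)" by (rule Inv_pinv[OF wf d 0])
  then show ?case by simp
next
  case (Suc j)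
  have pv: "pinv G G (Q P F)" by (rule Inv_pinv[OF wf d Suc.prems])
  have fo: "\<forall>u\<in>verts G. \<exists>u'\<in>verts G. ef G G j (insert (u, u') (Q P F))"
  proof
    fix u assume u: "u \<in> verts G"
    obtain P' F' c' where I': "Inv G A B m j P' F'" and sub: "Q P F \<subseteq> Q P' F'"
      and c': "(u, c') \<in> Q P' F'" "(c', u) \<in> Q P' F'"
      using step[OF wf d Suc.prems u] by blast
    have e: "ef G G j (Q P' F')" by (rule Suc.IH[OF I'])
    have "pinv G G (Q P' F')" by (rule Inv_pinv[OF wf d I'])
    then have cv: "c' \<in> verts G" using c'(1) unfolding pinv_def by blast
    have "ef G G j (insert (u, c') (Q P F))" by (rule ef_anti[OF e]) (use sub c'(1) in blast)
    then show "\<exists>u'\<in>verts G. ef G G j (insert (u, u') (Q P F))" using cv by blast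
  qed
  have bk: "\<forall>u'\<in>verts G. \<exists>u\<in>verts G. ef G G j (insert (u, u') (Q P F))"
  proof
    fix u assume u: "u \<in> verts G"
    obtain P' F' c' where I': "Inv G A B m j P' F'" and sub: "Q P F \<subseteq> Q P' F'"
      and c': "(u, c') \<in> Q P' F'" "(c', u) \<in> Q P' F'"
      using step[OF wf d Suc.prems u] by blast
    have e: "ef G G j (Q P' F')" by (rule Suc.IH[OF I'])
    have "pinv G G (Q P' F')" by (rule Inv_pinv[OF wf d I'])
    then have cv: "c' \<in> verts G" using c'(1) unfolding pinv_def by blast
    have "ef G G j (insert (c', u) (Q P F))" by (rule ef_anti[OF e]) (use sub c'(2) in blast)
    then show "\<exists>u'\<in>verts G. ef G G j (insert (u', u) (Q P F))" using cv by blast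
  qed
  show ?case using pv fo bk by simp
qed

theorem lemma4p12:
  fixes G :: "('v, 'c::finite) cgraph" and A B :: "'v set" and k :: nat
    and \<phi> :: "'c fm" and x :: nat
  assumes "wf_cgraph G"
    and "k \<ge> 1"
    and "A \<subseteq> verts G" and "B \<subseteq> verts G"
    and "dist_gt G A B (2 ^ k)"
    and "tp k (induced (expand G A) (nbhd G (2 ^ (k - 1) - 1) A))
         = tp k (induced (expand G B) (nbhd G (2 ^ (k - 1) - 1) B))"
    and "fv \<phi> \<subseteq> {x}" and "qr \<phi> \<le> k - 1"
  shows "(\<exists>a\<in>A. sat G ((\<lambda>_. undefined)(x := a)) \<phi>)
     \<longleftrightarrow> (\<exists>b\<in>B. sat G ((\<lambda>_. undefined)(x := b)) \<phi>)"
proof -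
  note wf = assms(1)
  define m where "m = k - 1"
  have km: "k = Suc m" using assms(2) unfolding m_def by simp
  have d: "dist_gt G A B (2 ^ Suc m)" using assms(5) km by simp
  let ?H1 = "HA G m A" and ?H2 = "HA G m B"
  have tpeq: "tp k ?H1 = tp k ?H2" using assms(6) unfolding HA_def m_def .
  let ?chi = "hint ?H1 k []"
  have fin1: "finite (verts ?H1)" by (rule HA_finite[OF wf])
  have "?chi \<in> tp k ?H1"
  proof -
    have "fv ?chi \<subseteq> {..<length ([] :: 'v list)}" by (rule hint_fv)
    then have "fv ?chi = {}" by simp
    moreover have "qr ?chi \<le> k" by (rule hint_qr[OF assms(2)])
    moreover have "sat ?H1 (env []) ?chi" by (rule hint_self[OF fin1]) simp
    ultimately show ?thesis unfolding tp_def env_Nil by blast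
  qed
  then have "?chi \<in> tp k ?H2" using tpeq by simp
  then have s2: "sat ?H2 (env []) ?chi" unfolding tp_def env_Nil by blast
  have "ef ?H1 ?H2 k (set (zip [] []))" by (rule hint_ef[OF fin1 _ _ _ s2]) simp_all
  then have ef1: "ef ?H1 ?H2 (Suc m) {}" using km by simp
  have fo: "\<forall>u\<in>verts ?H1. \<exists>u'\<in>verts ?H2. ef ?H1 ?H2 m {(u, u')}"
    and bk: "\<forall>u'\<in>verts ?H2. \<exists>u\<in>verts ?H1. ef ?H1 ?H2 m {(u, u')}"
    using ef1 by simp_all
  have inN: "a \<in> nbhd G (2 ^ m - 1) A" if "a \<in> A" for a
  proof -
    have av: "a \<in> verts G" using that assms(3) by blast
    have "reach G (2 ^ m - 1) a a" by (rule reach_refl[OF av])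
    then show ?thesis using that av unfolding nbhd_def by blast
  qed
  have inM: "b \<in> nbhd G (2 ^ m - 1) B" if "b \<in> B" for b
  proof -
    have bv: "b \<in> verts G" using that assms(4) by blast
    have "reach G (2 ^ m - 1) b b" by (rule reach_refl[OF bv])
    then show ?thesis using that bv unfolding nbhd_def by blast
  qed
  have key: "sat G ((\<lambda>_. undefined)(x := a)) \<phi> \<longleftrightarrow> sat G ((\<lambda>_. undefined)(x := b)) \<phi>"
    if a: "a \<in> A" and b: "b \<in> B" and e: "ef ?H1 ?H2 m {(a, b)}" for a b
  proof -
    have av: "a \<in> verts G" "b \<in> verts G" using a b assms(3,4) by blast+
    have I: "Inv G A B m m {(a, b)} {}"
      unfolding Inv_def
    proof (intro conjI)
      show "m \<le> m" by simp
      show "ef ?H1 ?H2 m {(a, b)}" by (rule e)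
      show "{} \<subseteq> verts G" by simp
      show "\<forall>f\<in>{}. \<forall>x y. (x, y) \<in> {(a, b)} \<longrightarrow> \<not> reach G (2 ^ m) x f \<and> \<not> reach G (2 ^ m) y f" by simp
      have "reach G 0 a a" "reach G 0 b b" using reach_refl av by metis+
      then show "\<forall>x y. (x, y) \<in> {(a, b)} \<longrightarrow> (\<exists>a\<in>A. reach G (2 ^ m - 2 ^ m) a x) \<and> (\<exists>b\<in>B. reach G (2 ^ m - 2 ^ m) b y)"
        using a b by auto
    qed
    have eG: "ef G G m (Q {(a, b)} {})" by (rule strategy[OF wf d I])
    have q: "qr \<phi> \<le> m" using assms(8) unfolding m_def .
    have fvv: "\<forall>y\<in>fv \<phi>. (((\<lambda>_. undefined)(x := a)) y, ((\<lambda>_. undefined)(x := b)) y) \<in> Q {(a, b)} {}"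
    proof
      fix y assume "y \<in> fv \<phi>"
      then have "y = x" using assms(7) by blast
      then show "(((\<lambda>_. undefined)(x := a)) y, ((\<lambda>_. undefined)(x := b)) y) \<in> Q {(a, b)} {}"
        unfolding Q_def by simp
    qed
    show ?thesis by (rule ef_sat[OF eG q fvv])
  qed
  show ?thesis
  proof
    assume "\<exists>a\<in>A. sat G ((\<lambda>_. undefined)(x := a)) \<phi>"
    then obtain a where a: "a \<in> A" "sat G ((\<lambda>_. undefined)(x := a)) \<phi>" by blast
    have "a \<in> verts ?H1" unfolding HA_verts using inN[OF a(1)] .
    then obtain b where b: "b \<in> verts ?H2" "ef ?H1 ?H2 m {(a, b)}" using fo by blast
    have "pinv ?H1 ?H2 {(a, b)}" by (rule ef_pinv[OF b(2)])
    then have "a \<in> col ?H1 None \<longleftrightarrow> b \<in> col ?H2 None" unfolding pinv_def by blast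
    moreover have "a \<in> col ?H1 None" unfolding HA_col_None using a(1) inN[OF a(1)] by blast
    ultimately have bB: "b \<in> B" unfolding HA_col_None by blast
    have "sat G ((\<lambda>_. undefined)(x := b)) \<phi>" using key[OF a(1) bB b(2)] a(2) by blast
    then show "\<exists>b\<in>B. sat G ((\<lambda>_. undefined)(x := b)) \<phi>" using bB by blast
  next
    assume "\<exists>b\<in>B. sat G ((\<lambda>_. undefined)(x := b)) \<phi>"
    then obtain b where b: "b \<in> B" "sat G ((\<lambda>_. undefined)(x := b)) \<phi>" by blast
    have "b \<in> verts ?H2" unfolding HA_verts using inM[OF b(1)] .
    then obtain a where a: "a \<in> verts ?H1" "ef ?H1 ?H2 m {(a, b)}" using bk by blast
    have "pinv ?H1 ?H2 {(a, b)}" by (rule ef_pinv[OF a(2)])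
    then have "a \<in> col ?H1 None \<longleftrightarrow> b \<in> col ?H2 None" unfolding pinv_def by blast
    moreover have "b \<in> col ?H2 None" unfolding HA_col_None using b(1) inM[OF b(1)] by blast
    ultimately have aA: "a \<in> A" unfolding HA_col_None by blast
    have "sat G ((\<lambda>_. undefined)(x := a)) \<phi>" using key[OF aA b(1) a(2)] b(2) by blast
    then show "\<exists>a\<in>A. sat G ((\<lambda>_. undefined)(x := a)) \<phi>" using aA by blast
  qed
qed

end
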